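(* Let $\mathbf{n}=(n_1,\dots,n_m)$ be integers with $n_1\ge n_2\ge\cdots\ge n_m\ge2$, and let $\mathbb{L}/\mathbb{K}$ be a Galois extension whose Galois group $G$ is generated by commuting $\theta_1,\dots,\theta_m$ such that $\mathbf{i}\mapsto\boldsymbol\theta^{\mathbf{i}}$ is a bijection $\Delta(\mathbf{n})\to G$ (so $G\cong\mathbb{Z}/n_1\mathbb{Z}\times\cdots\times\mathbb{Z}/n_m\mathbb{Z}$). Let $P\in\mathbb{L}[G]$ be nonzero. Then \[\mathrm{rk}_\mathbb{K}(P)\ \ge\ \min\Big\{\prod_{i=1}^m(n_i-u_i)\ :\ \mathbf{u}\in\Delta(\mathbf{n}),\ |\mathbf{u}|=\deg_{\boldsymbol\theta}(P)\Big\}=(n_s-\ell)\prod_{i=1}^{s-1}n_i,\] where $s\in\{1,\dots,m\}$ and $0\le\ell<n_s$ are integers with $\deg_{\boldsymbol\theta}(P)=\sum_{i=s+1}^m(n_i-1)+\ell$ (the value $(n_s-\ell)\prod_{i<s}n_i$ does not depend on the choice of such $(s,\ell)$).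
   Context: $\Delta(t)=\{0,1,\dots,t-1\}$, $\Delta(\mathbf{n})=\Delta(n_1)\times\cdots\times\Delta(n_m)$, $\boldsymbol\theta^{\mathbf{i}}=\theta_1^{i_1}\circ\cdots\circ\theta_m^{i_m}$, $|\mathbf{i}|=i_1+\cdots+i_m$. Every $P\in\mathbb{L}[G]$ is uniquely $P=\sum_{\mathbf{i}\in\Delta(\mathbf{n})}b_\mathbf{i}\boldsymbol\theta^\mathbf{i}$ with $b_\mathbf{i}\in\mathbb{L}$, and for $P\ne0$, $\deg_{\boldsymbol\theta}(P)=\max\{|\mathbf{i}|:b_\mathbf{i}\neq0\}$. $P$ acts on $\mathbb{L}$ as the $\mathbb{K}$-linear map $x\mapsto\sum b_\mathbf{i}\boldsymbol\theta^\mathbf{i}(x)$, and $\mathrm{rk}_\mathbb{K}(P)$ is its rank. *)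

theory Defs
  imports Main
begin

text \<open>The field L is the whole type 'a; K is a subset of it.
  Field automorphisms of L.\<close>
definition field_aut :: "('a::field \<Rightarrow> 'a) \<Rightarrow> bool" where
  "field_aut \<sigma> \<longleftrightarrow> bij \<sigma> \<and> (\<forall>x y. \<sigma> (x + y) = \<sigma> x + \<sigma> y)
     \<and> (\<forall>x y. \<sigma> (x * y) = \<sigma> x * \<sigma> y) \<and> \<sigma> 1 = 1"

definition is_subfield :: "'a::field set \<Rightarrow> bool" where
  "is_subfield K \<longleftrightarrow> 0 \<in> K \<and> 1 \<in> K \<and> (\<forall>x\<in>K. \<forall>y\<in>K. x + y \<in> K \<and> x * y \<in> K \<and> - x \<in> K)
     \<and> (\<forall>x\<in>K. x \<noteq> 0 \<longrightarrow> inverse x \<in> K)"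

definition galois_group :: "'a::field set \<Rightarrow> ('a \<Rightarrow> 'a) set" where
  "galois_group K = {\<sigma>. field_aut \<sigma> \<and> (\<forall>x\<in>K. \<sigma> x = x)}"

definition fixed_field :: "('a::field \<Rightarrow> 'a) set \<Rightarrow> 'a set" where
  "fixed_field G = {x. \<forall>\<sigma>\<in>G. \<sigma> x = x}"

definition galois_ext_with_group :: "'a::field set \<Rightarrow> ('a \<Rightarrow> 'a) set \<Rightarrow> bool" where
  "galois_ext_with_group K G \<longleftrightarrow> is_subfield K \<and> finite G \<and> galois_group K = G
     \<and> fixed_field (galois_group K) = K"

text \<open>Delta(n) for n = (n 0, ..., n (m-1)); multi-indices are functions nat => nat,
  zero outside {0..<m}.\<close>
definition Delta :: "nat \<Rightarrow> (nat \<Rightarrow> nat) \<Rightarrow> (nat \<Rightarrow> nat) set" where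
  "Delta m n = {i. (\<forall>j<m. i j < n j) \<and> (\<forall>j\<ge>m. i j = 0)}"

definition absidx :: "nat \<Rightarrow> (nat \<Rightarrow> nat) \<Rightarrow> nat" where
  "absidx m i = (\<Sum>j<m. i j)"

fun theta_pow :: "(nat \<Rightarrow> 'a \<Rightarrow> 'a) \<Rightarrow> nat \<Rightarrow> (nat \<Rightarrow> nat) \<Rightarrow> 'a \<Rightarrow> 'a" where
  "theta_pow \<theta> 0 i = id"
| "theta_pow \<theta> (Suc k) i = theta_pow \<theta> k i \<circ> (\<theta> k ^^ i k)"

definition op_action :: "(nat \<Rightarrow> 'a \<Rightarrow> 'a) \<Rightarrow> nat \<Rightarrow> (nat \<Rightarrow> nat) \<Rightarrow> ((nat \<Rightarrow> nat) \<Rightarrow> 'a::field) \<Rightarrow> 'a \<Rightarrow> 'a" where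
  "op_action \<theta> m n b x = (\<Sum>i\<in>Delta m n. b i * theta_pow \<theta> m i x)"

definition theta_deg :: "nat \<Rightarrow> (nat \<Rightarrow> nat) \<Rightarrow> ((nat \<Rightarrow> nat) \<Rightarrow> 'a::zero) \<Rightarrow> nat" where
  "theta_deg m n b = Max {absidx m i | i. i \<in> Delta m n \<and> b i \<noteq> 0}"

definition lin_indep_over :: "'a::field set \<Rightarrow> 'a set \<Rightarrow> bool" where
  "lin_indep_over K S \<longleftrightarrow> finite S \<and>
     (\<forall>c. (\<forall>s\<in>S. c s \<in> K) \<and> (\<Sum>s\<in>S. c s * s) = 0 \<longrightarrow> (\<forall>s\<in>S. c s = 0))"

text \<open>rank over K of a K-linear map f : L -> L = K-dimension of its image,
  i.e. the maximal size of a K-linearly independent subset of the image.\<close>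
definition rank_over :: "'a::field set \<Rightarrow> ('a \<Rightarrow> 'a) \<Rightarrow> nat" where
  "rank_over K f = Max (card ` {S. S \<subseteq> range f \<and> lin_indep_over K S})"

end

theory Submission
  imports Defs "HOL-Library.FuncSet" "HOL-Library.List_Lexorder"
begin


lemma fa_add: "field_aut s \<Longrightarrow> s (x + y) = s x + s y" by (simp add: field_aut_def)
lemma fa_mult: "field_aut s \<Longrightarrow> s (x * y) = s x * s y" by (simp add: field_aut_def)
lemma fa_one: "field_aut s \<Longrightarrow> s 1 = 1" by (simp add: field_aut_def)
lemma fa_zero: "field_aut s \<Longrightarrow> s 0 = 0"
proof -
  assume a: "field_aut s"
  have "s (0 + 0) = s 0 + s 0" using fa_add[OF a] .
  thus ?thesis by (metis add_0 add_cancel_right_right)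
qed
lemma fa_minus: "field_aut s \<Longrightarrow> s (- x) = - s x"
proof -
  assume a: "field_aut s"
  have "s (x + - x) = s x + s (- x)" using fa_add[OF a] .
  thus ?thesis using fa_zero[OF a] by (simp add: eq_neg_iff_add_eq_0 add.commute)
qed
lemma fa_diff: "field_aut s \<Longrightarrow> s (x - y) = s x - s y"
  using fa_add[of s x "-y"] fa_minus[of s y] by simp
lemma fa_sum: "field_aut s \<Longrightarrow> s (sum f A) = (\<Sum>a\<in>A. s (f a))"
  by (induction A rule: infinite_finite_induct) (auto simp: fa_zero fa_add)
lemma fa_inj: "field_aut s \<Longrightarrow> inj s" by (simp add: field_aut_def bij_def)
lemma fa_eq0: "field_aut s \<Longrightarrow> s x = 0 \<longleftrightarrow> x = 0"
  using fa_inj[of s] fa_zero[of s] by (metis injD)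

lemma gal_comp: "s \<in> galois_group K \<Longrightarrow> t \<in> galois_group K \<Longrightarrow> s \<circ> t \<in> galois_group K"
  by (auto simp: galois_group_def field_aut_def bij_comp)
lemma gal_id: "id \<in> galois_group K"
  by (auto simp: galois_group_def field_aut_def)
lemma gal_inv: assumes "s \<in> galois_group K" shows "inv s \<in> galois_group K"
proof -
  have fa: "field_aut s" and fx: "\<forall>x\<in>K. s x = x" using assms by (auto simp: galois_group_def)
  have b: "bij s" using fa by (simp add: field_aut_def)
  have si: "\<And>x. s (inv s x) = x" using b by (simp add: bij_is_surj surj_f_inv_f)
  have is': "\<And>x. inv s (s x) = x" using b by (simp add: bij_is_inj inv_f_f)
  have "bij (inv s)" using b by (simp add: bij_imp_bij_inv)
  moreover have "inv s (x + y) = inv s x + inv s y" for x y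
    by (metis fa_add[OF fa] si is')
  moreover have "inv s (x * y) = inv s x * inv s y" for x y
    by (metis fa_mult[OF fa] si is')
  moreover have "inv s 1 = 1" by (metis fa_one[OF fa] is')
  moreover have "\<forall>x\<in>K. inv s x = x" using fx by (metis is')
  ultimately show ?thesis by (simp add: galois_group_def field_aut_def)
qed

lemma dedekind:
  fixes F :: "('a::field \<Rightarrow> 'a) set"
  assumes "finite F" "\<forall>g\<in>F. field_aut g"
  shows "\<forall>a. (\<forall>x. (\<Sum>g\<in>F. a g * g x) = 0) \<longrightarrow> (\<forall>g\<in>F. a g = 0)"
  using assms
proof (induction F rule: finite_induct)
  case empty then show ?case by simp
next
  case (insert h F)
  show ?case
  proof (intro allI impI)
    fix a assume rel: "\<forall>x. (\<Sum>g\<in>insert h F. a g * g x) = 0"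
    have relF: "a h * h x + (\<Sum>g\<in>F. a g * g x) = 0" for x
      using rel insert(1,2) by simp
    have fah: "field_aut h" using insert.prems by simp
    have aF: "\<forall>g\<in>F. a g = 0"
    proof
      fix g assume gF: "g \<in> F"
      have "g \<noteq> h" using gF insert(2) by auto
      then obtain y where y: "g y \<noteq> h y" by auto
      have "\<forall>x. (\<Sum>g\<in>F. (a g * (g y - h y)) * g x) = 0"
      proof
        fix x
        have e1: "a h * h (y*x) + (\<Sum>g\<in>F. a g * g (y*x)) = 0" by (rule relF)
        have e2: "h y * (a h * h x + (\<Sum>g\<in>F. a g * g x)) = 0" by (simp add: relF)
        have "(\<Sum>g\<in>F. a g * g (y*x)) = (\<Sum>g\<in>F. a g * g y * g x)"
          using insert.prems by (intro sum.cong) (auto simp: fa_mult)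
        then have e1': "a h * h y * h x + (\<Sum>g\<in>F. a g * g y * g x) = 0"
          using e1 fa_mult[OF fah] by (simp add: mult.assoc)
        have e2': "a h * h y * h x + (\<Sum>g\<in>F. a g * h y * g x) = 0"
          using e2 by (simp add: algebra_simps sum_distrib_left)
        have "(\<Sum>g\<in>F. (a g * (g y - h y)) * g x) = (\<Sum>g\<in>F. a g * g y * g x) - (\<Sum>g\<in>F. a g * h y * g x)"
          by (simp add: algebra_simps sum_subtractf)
        also have "\<dots> = 0" using e1' e2' by (simp add: eq_neg_iff_add_eq_0[symmetric])
        finally show "(\<Sum>g\<in>F. (a g * (g y - h y)) * g x) = 0" .
      qed
      then have "a g * (g y - h y) = 0"
        using insert.IH[rule_format, where a="\<lambda>g. a g * (g y - h y)"] insert.prems gF by simp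
      then show "a g = 0" using y by simp
    qed
    have "a h * h 1 + (\<Sum>g\<in>F. a g * g 1) = 0" by (rule relF)
    then have "a h = 0" using aF fa_one[OF fah] by simp
    then show "\<forall>g\<in>insert h F. a g = 0" using aF by simp
  qed
qed


lemma homog:
  fixes A :: "'e \<Rightarrow> 'u \<Rightarrow> 'a::field"
  assumes "finite E" "finite U" "card E < card U"
  shows "\<exists>c. (\<exists>u\<in>U. c u \<noteq> 0) \<and> (\<forall>e\<in>E. (\<Sum>u\<in>U. A e u * c u) = 0)"
  using assms
proof (induction E arbitrary: U A rule: finite_induct)
  case empty
  then have "U \<noteq> {}" by auto
  then show ?case by (intro exI[of _ "\<lambda>_. 1"]) auto
next
  case (insert e0 E)
  have cE: "card (insert e0 E) = Suc (card E)" using insert(1,2) by simp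
  show ?case
  proof (cases "\<forall>u\<in>U. A e0 u = 0")
    case True
    obtain c where c: "\<exists>u\<in>U. c u \<noteq> 0" "\<forall>e\<in>E. (\<Sum>u\<in>U. A e u * c u) = 0"
      using insert.IH[of U A] insert.prems cE by auto
    then show ?thesis using True by (intro exI[of _ c]) auto
  next
    case False
    then obtain u0 where u0: "u0 \<in> U" "A e0 u0 \<noteq> 0" by auto
    define U' where "U' = U - {u0}"
    have fU': "finite U'" using insert.prems U'_def by simp
    have cU': "card U' = card U - 1" using u0 insert.prems U'_def by simp
    have "card E < card U'" using cU' cE insert.prems by simp
    define A' where "A' e u = A e u - A e u0 * A e0 u / A e0 u0" for e u
    obtain c' where c': "\<exists>u\<in>U'. c' u \<noteq> 0" "\<forall>e\<in>E. (\<Sum>u\<in>U'. A' e u * c' u) = 0"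
      using insert.IH[of U' A'] fU' \<open>card E < card U'\<close> by auto
    define S where "S = (\<Sum>u\<in>U'. A e0 u * c' u)"
    define c where "c = c'(u0 := - S / A e0 u0)"
    have split: "(\<Sum>u\<in>U. A e u * c u) = A e u0 * c u0 + (\<Sum>u\<in>U'. A e u * c' u)" for e
    proof -
      have "U = insert u0 U'" using u0 U'_def by auto
      moreover have "u0 \<notin> U'" using U'_def by simp
      ultimately have "(\<Sum>u\<in>U. A e u * c u) = A e u0 * c u0 + (\<Sum>u\<in>U'. A e u * c u)"
        using fU' by simp
      moreover have "(\<Sum>u\<in>U'. A e u * c u) = (\<Sum>u\<in>U'. A e u * c' u)"
        using U'_def c_def by (intro sum.cong) auto
      ultimately show ?thesis by simp
    qed
    have "\<exists>u\<in>U. c u \<noteq> 0" using c'(1) U'_def c_def by auto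
    moreover have "\<forall>e\<in>insert e0 E. (\<Sum>u\<in>U. A e u * c u) = 0"
    proof
      fix e assume "e \<in> insert e0 E"
      then consider "e = e0" | "e \<in> E" by auto
      then show "(\<Sum>u\<in>U. A e u * c u) = 0"
      proof cases
        case 1
        then show ?thesis using split[of e0] u0(2) by (simp add: c_def S_def)
      next
        case 2
        have "0 = (\<Sum>u\<in>U'. A' e u * c' u)" using c'(2) 2 by simp
        also have "\<dots> = (\<Sum>u\<in>U'. A e u * c' u) - A e u0 / A e0 u0 * S"
          by (simp add: A'_def S_def algebra_simps sum_subtractf sum_distrib_left sum_divide_distrib)
        finally have "(\<Sum>u\<in>U'. A e u * c' u) = A e u0 / A e0 u0 * S" by simp
        then show ?thesis using split[of e] by (simp add: c_def)
      qed
    qed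
    ultimately show ?thesis by blast
  qed
qed


lemma funpow_comm1: "(\<And>x. f (g x) = g (f x)) \<Longrightarrow> f ((g ^^ b) x) = (g ^^ b) (f x)"
  by (induction b) auto

lemma funpow_comm: "(\<And>x. f (g x) = g (f x)) \<Longrightarrow> (f ^^ a) ((g ^^ b) x) = (g ^^ b) ((f ^^ a) x)"
proof (induction a)
  case 0 then show ?case by simp
next
  case (Suc a)
  then show ?case using funpow_comm1[of f g b] by simp
qed

lemma tp_cong: "(\<forall>k<p. i k = i' k) \<Longrightarrow> theta_pow \<theta> p i = theta_pow \<theta> p i'"
  by (induction p) auto

lemma tp_Suc: "theta_pow \<theta> (Suc p) i x = theta_pow \<theta> p i ((\<theta> p ^^ i p) x)"
  by simp

lemma tp_comm:
  assumes comm: "\<forall>j<m. \<forall>k<m. \<theta> j \<circ> \<theta> k = \<theta> k \<circ> \<theta> j"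
  shows "p \<le> q \<Longrightarrow> q < m \<Longrightarrow> (\<theta> q ^^ a) (theta_pow \<theta> p i x) = theta_pow \<theta> p i ((\<theta> q ^^ a) x)"
proof (induction p arbitrary: x)
  case 0 then show ?case by simp
next
  case (Suc p)
  have c: "(\<theta> q ^^ a) ((\<theta> p ^^ i p) y) = (\<theta> p ^^ i p) ((\<theta> q ^^ a) y)" for y
  proof (rule funpow_comm)
    fix z
    have "p < m" "q < m" using Suc.prems by simp_all
    then have "\<theta> q \<circ> \<theta> p = \<theta> p \<circ> \<theta> q" using comm by blast
    then show "\<theta> q (\<theta> p z) = \<theta> p (\<theta> q z)" by (simp add: fun_eq_iff)
  qed
  have ih: "(\<theta> q ^^ a) (theta_pow \<theta> p i y) = theta_pow \<theta> p i ((\<theta> q ^^ a) y)" for y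
    using Suc.IH Suc.prems by simp
  show ?case unfolding tp_Suc by (simp only: ih c)
qed

lemma tp_add:
  assumes comm: "\<forall>j<m. \<forall>k<m. \<theta> j \<circ> \<theta> k = \<theta> k \<circ> \<theta> j"
  shows "p \<le> m \<Longrightarrow> theta_pow \<theta> p j (theta_pow \<theta> p i x) = theta_pow \<theta> p (\<lambda>k. j k + i k) x"
proof (induction p arbitrary: x)
  case 0 then show ?case by simp
next
  case (Suc p)
  have c: "(\<theta> p ^^ j p) (theta_pow \<theta> p i y) = theta_pow \<theta> p i ((\<theta> p ^^ j p) y)" for y
    using tp_comm[OF comm, of p p] Suc.prems by auto
  show ?case unfolding tp_Suc using Suc c by (simp add: funpow_add)
qed

lemma funpow_mod: "f ^^ n = id \<Longrightarrow> f ^^ a = f ^^ (a mod n)"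
proof -
  assume h: "f ^^ n = id"
  have "f ^^ a = f ^^ (n * (a div n) + a mod n)" by simp
  also have "\<dots> = ((f ^^ n) ^^ (a div n)) \<circ> (f ^^ (a mod n))"
    by (simp only: funpow_add funpow_mult)
  also have "\<dots> = f ^^ (a mod n)" by (simp only: h id_funpow id_comp)
  finally show ?thesis .
qed

lemma tp_mod:
  assumes ord: "\<forall>j<m. \<theta> j ^^ n j = id"
  shows "p \<le> m \<Longrightarrow> theta_pow \<theta> p i = theta_pow \<theta> p (\<lambda>k. i k mod n k)"
proof (induction p)
  case 0 then show ?case by simp
next
  case (Suc p)
  have "\<theta> p ^^ n p = id" using ord Suc.prems by auto
  then have e: "\<theta> p ^^ i p = \<theta> p ^^ (i p mod n p)" by (rule funpow_mod)
  have ih: "theta_pow \<theta> p i = theta_pow \<theta> p (\<lambda>k. i k mod n k)" using Suc.IH Suc.prems by simp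
  show ?case by (simp only: theta_pow.simps ih e)
qed

definition addm :: "(nat \<Rightarrow> nat) \<Rightarrow> (nat \<Rightarrow> nat) \<Rightarrow> (nat \<Rightarrow> nat) \<Rightarrow> nat \<Rightarrow> nat" where
  "addm n j i = (\<lambda>k. (j k + i k) mod n k)"

lemma tp_apply_addm:
  assumes comm: "\<forall>j<m. \<forall>k<m. \<theta> j \<circ> \<theta> k = \<theta> k \<circ> \<theta> j" and ord: "\<forall>j<m. \<theta> j ^^ n j = id"
  shows "theta_pow \<theta> m j (theta_pow \<theta> m i x) = theta_pow \<theta> m (addm n j i) x"
proof -
  have "theta_pow \<theta> m j (theta_pow \<theta> m i x) = theta_pow \<theta> m (\<lambda>k. j k + i k) x"
    using tp_add[OF comm, of m j i x] by simp
  also have "theta_pow \<theta> m (\<lambda>k. j k + i k) = theta_pow \<theta> m (addm n j i)"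
    using tp_mod[OF ord, of m "\<lambda>k. j k + i k"] by (simp add: addm_def)
  finally show ?thesis .
qed

lemma addm_Delta: "j \<in> Delta m n \<Longrightarrow> i \<in> Delta m n \<Longrightarrow> addm n j i \<in> Delta m n"
  by (auto simp: Delta_def addm_def)


lemma artin:
  assumes K: "is_subfield K" and fin: "finite (galois_group K)"
    and fixK: "fixed_field (galois_group K) = K"
    and ind: "lin_indep_over K S"
  shows "card S \<le> card (galois_group K)"
proof (rule ccontr)
  assume "\<not> ?thesis"
  then have lt: "card (galois_group K) < card S" by simp
  define Gk where "Gk = galois_group K"
  have fS: "finite S" using ind by (simp add: lin_indep_over_def)
  define Sol where "Sol = {c. (\<exists>s\<in>S. c s \<noteq> 0) \<and> (\<forall>\<sigma>\<in>Gk. (\<Sum>s\<in>S. \<sigma> s * c s) = 0)}"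
  obtain c0 where "c0 \<in> Sol"
    using homog[of Gk S "\<lambda>\<sigma> s. \<sigma> s"] fin fS lt by (auto simp: Sol_def Gk_def)
  then obtain c where c: "c \<in> Sol" and cmin: "\<forall>y. y \<in> Sol \<longrightarrow> card {s\<in>S. c s \<noteq> 0} \<le> card {s\<in>S. y s \<noteq> 0}"
    using ex_has_least_nat[of "\<lambda>c. c \<in> Sol" c0 "\<lambda>c. card {s\<in>S. c s \<noteq> 0}"] by blast
  obtain s0 where s0: "s0 \<in> S" "c s0 \<noteq> 0" using c by (auto simp: Sol_def)
  define c' where "c' s = c s / c s0" for s
  have c'1: "c' s0 = 1" using s0 by (simp add: c'_def)
  have supp: "{s\<in>S. c' s \<noteq> 0} = {s\<in>S. c s \<noteq> 0}" using s0 by (auto simp: c'_def)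
  have c'sol: "\<forall>\<sigma>\<in>Gk. (\<Sum>s\<in>S. \<sigma> s * c' s) = 0"
  proof
    fix \<sigma> assume "\<sigma> \<in> Gk"
    then have "(\<Sum>s\<in>S. \<sigma> s * c s) = 0" using c by (auto simp: Sol_def)
    then have "(\<Sum>s\<in>S. \<sigma> s * c s) / c s0 = 0" by simp
    then show "(\<Sum>s\<in>S. \<sigma> s * c' s) = 0" by (simp add: c'_def sum_divide_distrib)
  qed
  have inv_all: "\<forall>s\<in>S. \<tau> (c' s) = c' s" if \<tau>: "\<tau> \<in> Gk" for \<tau>
  proof (rule ccontr)
    assume nall: "\<not> (\<forall>s\<in>S. \<tau> (c' s) = c' s)"
    have fa: "field_aut \<tau>" using \<tau> by (simp add: Gk_def galois_group_def)
    have bt: "bij \<tau>" using fa by (simp add: field_aut_def)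
    define d where "d s = c' s - \<tau> (c' s)" for s
    have dsol: "\<forall>\<sigma>\<in>Gk. (\<Sum>s\<in>S. \<sigma> s * d s) = 0"
    proof
      fix \<sigma> assume \<sigma>: "\<sigma> \<in> Gk"
      have \<rho>: "inv \<tau> \<circ> \<sigma> \<in> Gk" using \<sigma> \<tau> by (simp add: Gk_def gal_inv gal_comp)
      have "(\<Sum>s\<in>S. (inv \<tau> \<circ> \<sigma>) s * c' s) = 0" using c'sol \<rho> by blast
      then have "\<tau> (\<Sum>s\<in>S. (inv \<tau> \<circ> \<sigma>) s * c' s) = 0" using fa_zero[OF fa] by simp
      then have "(\<Sum>s\<in>S. \<tau> (inv \<tau> (\<sigma> s)) * \<tau> (c' s)) = 0"
        by (simp add: fa_sum[OF fa] fa_mult[OF fa])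
      then have e2: "(\<Sum>s\<in>S. \<sigma> s * \<tau> (c' s)) = 0"
        using bt by (simp add: bij_is_surj surj_f_inv_f)
      have "(\<Sum>s\<in>S. \<sigma> s * d s) = (\<Sum>s\<in>S. \<sigma> s * c' s) - (\<Sum>s\<in>S. \<sigma> s * \<tau> (c' s))"
        by (simp add: d_def algebra_simps sum_subtractf)
      then show "(\<Sum>s\<in>S. \<sigma> s * d s) = 0" using e2 c'sol \<sigma> by simp
    qed
    have "\<exists>s\<in>S. d s \<noteq> 0" using nall by (metis d_def eq_iff_diff_eq_0)
    then have dS: "d \<in> Sol" using dsol by (simp add: Sol_def)
    have sub: "{s\<in>S. d s \<noteq> 0} \<subseteq> {s\<in>S. c' s \<noteq> 0} - {s0}"
      using c'1 fa_one[OF fa] fa_zero[OF fa] by (auto simp: d_def)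
    have "card {s\<in>S. d s \<noteq> 0} \<le> card ({s\<in>S. c' s \<noteq> 0} - {s0})"
      using sub fS by (intro card_mono) auto
    also have "\<dots> < card {s\<in>S. c' s \<noteq> 0}"
      using s0 c'1 fS by (intro card_Diff1_less) auto
    finally show False using cmin dS supp by fastforce
  qed
  have inK: "\<forall>s\<in>S. c' s \<in> K"
    using inv_all fixK by (auto simp: fixed_field_def Gk_def)
  have "(\<Sum>s\<in>S. c' s * s) = 0"
  proof -
    have "(\<Sum>s\<in>S. id s * c' s) = 0" using c'sol gal_id[of K] unfolding Gk_def by blast
    then show ?thesis by (simp add: mult.commute)
  qed
  then have "\<forall>s\<in>S. c' s = 0" using ind inK by (simp add: lin_indep_over_def)
  then show False using s0 c'1 by simp
qed


lemma Delta_eq: "Delta m a = (\<lambda>f k. if k < m then f k else 0) ` (PiE {..<m} (\<lambda>k. {..<a k}))"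
proof (intro set_eqI iffI)
  fix j assume j: "j \<in> Delta m a"
  have "restrict j {..<m} \<in> PiE {..<m} (\<lambda>k. {..<a k})" using j by (auto simp: Delta_def)
  moreover have "j = (\<lambda>k. if k < m then restrict j {..<m} k else 0)"
    using j by (auto simp: Delta_def)
  ultimately show "j \<in> (\<lambda>f k. if k < m then f k else 0) ` (PiE {..<m} (\<lambda>k. {..<a k}))" by blast
next
  fix j assume "j \<in> (\<lambda>f k. if k < m then f k else 0) ` (PiE {..<m} (\<lambda>k. {..<a k}))"
  then show "j \<in> Delta m a" by (auto simp: Delta_def PiE_def Pi_def)
qed

lemma card_Delta: "card (Delta m a) = (\<Prod>k<m. a k)"
proof -
  have "inj_on (\<lambda>f k. if k < m then f k else 0) (PiE {..<m} (\<lambda>k. {..<a k}))"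
  proof (rule inj_onI)
    fix f g assume f: "f \<in> PiE {..<m} (\<lambda>k. {..<a k})" and g: "g \<in> PiE {..<m} (\<lambda>k. {..<a k})"
      and e: "(\<lambda>k. if k < m then f k else 0) = (\<lambda>k. if k < m then g k else 0)"
    show "f = g"
    proof (rule PiE_ext[OF f g])
      fix k assume "k \<in> {..<m}" then show "f k = g k" using fun_cong[OF e, of k] by simp
    qed
  qed
  then show ?thesis unfolding Delta_eq by (simp add: card_image card_PiE)
qed

lemma finite_Delta: "finite (Delta m a)"
  unfolding Delta_eq by (intro finite_imageI finite_PiE) auto

definition key :: "nat \<Rightarrow> (nat \<Rightarrow> nat) \<Rightarrow> nat list" where
  "key m v = absidx m v # map v [0..<m]"

lemma key_inj: "inj_on (key m) (Delta m n)"
proof (rule inj_onI)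
  fix v w assume v: "v \<in> Delta m n" and w: "w \<in> Delta m n" and e: "key m v = key m w"
  have "map v [0..<m] = map w [0..<m]" using e by (simp add: key_def)
  then have "\<forall>k<m. v k = w k" by (simp add: map_eq_conv)
  moreover have "\<forall>k\<ge>m. v k = 0 \<and> w k = 0" using v w by (simp add: Delta_def)
  ultimately show "v = w" by (metis not_less ext)
qed

lemma list_add_less: "length xs = length zs \<Longrightarrow> length ys = length zs \<Longrightarrow> (xs::nat list) < ys \<Longrightarrow>
   map2 (+) zs xs < map2 (+) zs ys"
proof (induction zs arbitrary: xs ys)
  case Nil then show ?case by simp
next
  case (Cons z zs)
  then obtain x xs' y ys' where xy: "xs = x # xs'" "ys = y # ys'"
    by (metis length_Suc_conv)
  have l: "length xs' = length zs" "length ys' = length zs" using Cons.prems xy by simp_all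
  have "x < y \<or> x = y \<and> xs' < ys'" using Cons.prems(3) xy by simp
  then have "z + x < z + y \<or> z + x = z + y \<and> map2 (+) zs xs' < map2 (+) zs ys'"
    using Cons.IH[OF l] by auto
  then show ?case using xy by (simp only: zip_Cons_Cons list.map prod.case Cons_less_Cons)
qed

lemma absidx_add: "absidx m (\<lambda>k. j k + i k) = absidx m j + absidx m i"
  by (simp add: absidx_def sum.distrib)

lemma key_main:
  assumes iD: "i \<in> Delta m n" and uD: "u \<in> Delta m n" and lt: "key m i < key m u"
    and jD: "j \<in> Delta m n" and ju: "\<forall>k<m. j k + u k < n k"
  shows "key m (addm n j i) < key m (\<lambda>k. j k + u k)"
proof (cases "\<exists>k<m. n k \<le> j k + i k")
  case True
  then obtain k0 where k0: "k0 < m" "n k0 \<le> j k0 + i k0" by auto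
  have le_iu: "absidx m i \<le> absidx m u" using lt by (auto simp: key_def)
  have "absidx m (addm n j i) < absidx m (\<lambda>k. j k + i k)"
    unfolding absidx_def addm_def
  proof (rule sum_strict_mono_ex1)
    show "finite {..<m}" by simp
    show "\<forall>x\<in>{..<m}. (j x + i x) mod n x \<le> j x + i x" by simp
    have "n k0 > 0" using jD k0 by (auto simp: Delta_def)
    then have "(j k0 + i k0) mod n k0 < j k0 + i k0"
      using k0(2) by (meson le_trans mod_less_divisor not_le)
    then show "\<exists>a\<in>{..<m}. (j a + i a) mod n a < j a + i a" using k0 by auto
  qed
  also have "\<dots> \<le> absidx m (\<lambda>k. j k + u k)" using le_iu by (simp add: absidx_add)
  finally show ?thesis by (simp add: key_def)
next
  case False
  then have nw: "\<forall>k<m. addm n j i k = j k + i k" by (auto simp: addm_def)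
  have ka: "key m (addm n j i) = key m (\<lambda>k. j k + i k)"
    unfolding key_def absidx_def using nw by simp
  show ?thesis
  proof (cases "absidx m i < absidx m u")
    case True then show ?thesis unfolding ka by (simp add: key_def absidx_add)
  next
    case False
    then have eq: "absidx m i = absidx m u" and ml: "map i [0..<m] < map u [0..<m]"
      using lt by (auto simp: key_def)
    have "map (\<lambda>k. j k + i k) [0..<m] = map2 (+) (map j [0..<m]) (map i [0..<m])"
      by (simp add: map2_map_map)
    moreover have "map (\<lambda>k. j k + u k) [0..<m] = map2 (+) (map j [0..<m]) (map u [0..<m])"
      by (simp add: map2_map_map)
    ultimately have "map (\<lambda>k. j k + i k) [0..<m] < map (\<lambda>k. j k + u k) [0..<m]"
      using list_add_less[OF _ _ ml, of "map j [0..<m]"] by simp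
    then show ?thesis unfolding ka by (simp add: key_def absidx_add eq)
  qed
qed


lemma ineqA:
  fixes x l M N :: nat assumes "x \<le> l" "l < M" "M \<le> N"
  shows "(M - l) * N \<le> (N - (l - x)) * (M - x)"
proof -
  have e: "int (N - (l - x)) = int N - (int l - int x)" "int (M - x) = int M - int x"
    "int (M - l) = int M - int l" using assms by (simp_all add: of_nat_diff)
  have id: "(int N - (int l - int x)) * (int M - int x) - (int M - int l) * int N
      = (int l - int x) * (int N - int M) + int x * (int l - int x)" by algebra
  have "(int l - int x) * (int N - int M) + int x * (int l - int x) \<ge> 0"
    using assms by (intro add_nonneg_nonneg mult_nonneg_nonneg) auto
  then have "(int M - int l) * int N \<le> (int N - (int l - int x)) * (int M - int x)"
    using id by linarith
  then have "int ((M - l) * N) \<le> int ((N - (l - x)) * (M - x))" by (simp only: of_nat_mult e)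
  then show ?thesis by (simp only: of_nat_le_iff)
qed

lemma ineqB:
  fixes c A :: nat assumes "c < A"
  shows "A \<le> (c + 1) * (A - c)"
proof -
  have e: "int (A - c) = int A - int c" using assms by (simp add: of_nat_diff)
  have id: "(int c + 1) * (int A - int c) - int A = int c * (int A - int c - 1)" by algebra
  have "int c * (int A - int c - 1) \<ge> 0" using assms by (intro mult_nonneg_nonneg) auto
  then have "int A \<le> (int c + 1) * (int A - int c)" using id by linarith
  then have "int A \<le> int ((c + 1) * (A - c))" by (simp only: of_nat_mult e of_nat_add of_nat_1)
  then show ?thesis by (simp only: of_nat_le_iff)
qed

lemma ineqC:
  fixes A t N :: nat assumes "A \<le> t" "t \<le> N"
  shows "A * N \<le> t * (N - (t - A))"
proof -
  have e: "int (N - (t - A)) = int N - (int t - int A)" using assms by (simp add: of_nat_diff)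
  have id: "int t * (int N - (int t - int A)) - int A * int N = (int t - int A) * (int N - int t)" by algebra
  have "(int t - int A) * (int N - int t) \<ge> 0" using assms by (intro mult_nonneg_nonneg) auto
  then have "int A * int N \<le> int t * (int N - (int t - int A))" using id by linarith
  then have "int (A * N) \<le> int (t * (N - (t - A)))" by (simp only: of_nat_mult e)
  then show ?thesis by (simp only: of_nat_le_iff)
qed

lemma gLt_Suc: "(s::nat) < m \<Longrightarrow> {s<..<Suc m} = insert m {s<..<m}" by auto
lemma gLt_pred: "0 < (s::nat) \<Longrightarrow> s < m \<Longrightarrow> {s - 1<..<m} = insert s {s<..<m}" by (auto; linarith)

lemma comb_lower:
  fixes n u :: "nat \<Rightarrow> nat"
  shows "(\<forall>i j. i \<le> j \<and> j < m \<longrightarrow> n j \<le> n i) \<Longrightarrow> (\<forall>k<m. u k < n k) \<Longrightarrow>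
    s < m \<Longrightarrow> l < n s \<Longrightarrow> (\<Sum>k<m. u k) = (\<Sum>j\<in>{s<..<m}. n j - 1) + l \<Longrightarrow>
    (n s - l) * (\<Prod>k<s. n k) \<le> (\<Prod>k<m. n k - u k)"
proof (induction m arbitrary: s l)
  case 0 then show ?case by simp
next
  case (Suc m)
  note mono = Suc.prems(1) and uD = Suc.prems(2)
  have monom: "\<forall>i j. i \<le> j \<and> j < m \<longrightarrow> n j \<le> n i" using mono by auto
  have uDm: "\<forall>k<m. u k < n k" using uD by auto
  have um: "u m < n m" using uD by simp
  define c where "c = n m - 1 - u m"
  have am: "n m - u m = c + 1" using um c_def by simp
  have prodS: "(\<Prod>k<Suc m. n k - u k) = (\<Prod>k<m. n k - u k) * (c + 1)" using am by simp
  have sumS: "(\<Sum>k<Suc m. u k) = (\<Sum>k<m. u k) + u m" by simp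
  show ?case
  proof (cases "s = m")
    case True
    then have dl: "(\<Sum>k<Suc m. u k) = l" using Suc.prems(5) by simp
    show ?thesis
    proof (cases m)
      case 0
      then show ?thesis using dl True by simp
    next
      case (Suc m')
      define d' where "d' = (\<Sum>k<m. u k)"
      have d'l: "d' + u m = l" using dl sumS d'_def by simp
      have nm: "n m \<le> n m'" using mono Suc by simp
      have "d' < n m'" using d'l Suc.prems(4) True nm by simp
      moreover have "(\<Sum>j\<in>{m'<..<m}. n j - 1) = 0" using Suc by simp
      ultimately have IH: "(n m' - d') * (\<Prod>k<m'. n k) \<le> (\<Prod>k<m. n k - u k)"
        using Suc.IH[OF monom uDm, of m' d'] Suc d'_def by simp
      have pm: "(\<Prod>k<m. n k) = (\<Prod>k<m'. n k) * n m'" using Suc by simp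
      have "(n m - l) * (\<Prod>k<m. n k) = ((n m - l) * n m') * (\<Prod>k<m'. n k)"
        using pm by (simp only: mult_ac)
      also have "\<dots> \<le> ((n m' - (l - u m)) * (n m - u m)) * (\<Prod>k<m'. n k)"
        using ineqA[of "u m" l "n m" "n m'"] d'l Suc.prems(4) True nm
        by (intro mult_le_mono1) simp
      also have "\<dots> = ((n m' - d') * (\<Prod>k<m'. n k)) * (n m - u m)"
      proof -
        have "l - u m = d'" using d'l by simp
        then show ?thesis by (simp add: mult_ac)
      qed
      also have "\<dots> \<le> (\<Prod>k<m. n k - u k) * (n m - u m)"
        using IH by (intro mult_le_mono1)
      finally show ?thesis using True by simp
    qed
  next
    case False
    then have sm: "s < m" using Suc.prems(3) by simp
    have d: "(\<Sum>k<m. u k) + u m = (\<Sum>j\<in>{s<..<m}. n j - 1) + (n m - 1) + l"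
      using Suc.prems(5) sumS gLt_Suc[OF sm] by simp
    then have d': "(\<Sum>k<m. u k) = (\<Sum>j\<in>{s<..<m}. n j - 1) + (l + c)"
      using um c_def by simp
    show ?thesis
    proof (cases "l + c < n s")
      case True
      have IH: "(n s - (l + c)) * (\<Prod>k<s. n k) \<le> (\<Prod>k<m. n k - u k)"
        using Suc.IH[OF monom uDm sm True d'] .
      have "(n s - l) * (\<Prod>k<s. n k) \<le> ((c + 1) * (n s - l - c)) * (\<Prod>k<s. n k)"
        using ineqB[of c "n s - l"] True by (intro mult_le_mono1) simp
      also have "\<dots> = ((n s - (l + c)) * (\<Prod>k<s. n k)) * (c + 1)" by (simp only: diff_diff_left mult_ac)
      also have "\<dots> \<le> (\<Prod>k<m. n k - u k) * (c + 1)" using IH by (intro mult_le_mono1)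
      finally show ?thesis using prodS by simp
    next
      case False
      have s0: "0 < s"
      proof (rule ccontr)
        assume "\<not> 0 < s"
        then have s0: "s = 0" by simp
        have "(\<Sum>k<m. u k) \<le> (\<Sum>k<m. n k - 1)"
        proof (intro sum_mono)
          fix k assume "k \<in> {..<m}" then have "u k < n k" using uDm by simp
          then show "u k \<le> n k - 1" by simp
        qed
        also have "\<dots> = (n 0 - 1) + (\<Sum>j\<in>{0<..<m}. n j - 1)"
        proof -
          have "{..<m} = insert 0 {0<..<m}" using sm s0 by auto
          then show ?thesis by simp
        qed
        finally have le: "(\<Sum>k<m. u k) \<le> (n 0 - 1) + (\<Sum>j\<in>{0<..<m}. n j - 1)" .
        have "\<not> l + c < n 0" "l < n 0" using False Suc.prems(4) s0 by simp_all
        then have "n 0 - 1 < l + c" by linarith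
        then have "(n 0 - 1) + (\<Sum>j\<in>{0<..<m}. n j - 1) < (\<Sum>j\<in>{0<..<m}. n j - 1) + (l + c)"
          by linarith
        moreover have "(\<Sum>k<m. u k) = (\<Sum>j\<in>{0<..<m}. n j - 1) + (l + c)" using d'[unfolded s0] .
        ultimately show False using le by linarith
      qed
      define s' where "s' = s - 1"
      define l' where "l' = l + c - (n s - 1)"
      have nss: "n s \<le> n s'" using mono s'_def s0 Suc.prems(3) by simp
      have nms: "n m \<le> n s'" using mono s'_def sm by simp
      have l'c: "l' \<le> c" using l'_def Suc.prems(4) by simp
      have l'lt: "l' < n s'" using l'c c_def nms um by simp
      have ss': "s' < m" using s'_def sm by simp
      have dd: "(\<Sum>k<m. u k) = (\<Sum>j\<in>{s'<..<m}. n j - 1) + l'"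
      proof -
        have "(\<Sum>j\<in>{s'<..<m}. n j - 1) = (n s - 1) + (\<Sum>j\<in>{s<..<m}. n j - 1)"
          using gLt_pred[OF s0 sm] s'_def by simp
        then show ?thesis using d' l'_def False by simp
      qed
      have IH: "(n s' - l') * (\<Prod>k<s'. n k) \<le> (\<Prod>k<m. n k - u k)"
        using Suc.IH[OF monom uDm ss' l'lt dd] .
      have sS: "s = Suc s'" using s0 s'_def by simp
      have ps: "(\<Prod>k<s. n k) = (\<Prod>k<s'. n k) * n s'"
        unfolding sS by (rule prod.lessThan_Suc)
      have A: "n s - l \<le> c + 1" using False Suc.prems(4) by simp
      have t: "c + 1 \<le> n s'" using am nms um by simp
      have l'eq: "l' = (c + 1) - (n s - l)" using l'_def False Suc.prems(4) by simp
      have "(n s - l) * (\<Prod>k<s. n k) = ((n s - l) * n s') * (\<Prod>k<s'. n k)"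
        using ps by (simp only: mult_ac)
      also have "\<dots> \<le> ((c + 1) * (n s' - l')) * (\<Prod>k<s'. n k)"
        using ineqC[OF A t] l'eq by (intro mult_le_mono1) simp
      also have "\<dots> = ((n s' - l') * (\<Prod>k<s'. n k)) * (c + 1)" by (simp only: mult_ac)
      also have "\<dots> \<le> (\<Prod>k<m. n k - u k) * (c + 1)" using IH by (intro mult_le_mono1)
      finally show ?thesis using prodS by simp
    qed
  qed
qed

lemma split3_sum: "(s::nat) < m \<Longrightarrow> (\<Sum>k<m. f k) = (\<Sum>k<s. f k) + f s + (\<Sum>k\<in>{s<..<m}. f k)"
proof -
  assume sm: "s < m"
  have e: "{..<m} = {..<s} \<union> ({s} \<union> {s<..<m})" using sm by (auto; linarith)
  have "sum f ({..<s} \<union> ({s} \<union> {s<..<m})) = sum f {..<s} + sum f ({s} \<union> {s<..<m})"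
    by (rule sum.union_disjoint) auto
  then show ?thesis unfolding e by (simp add: add.assoc)
qed

lemma split3_prod: "(s::nat) < m \<Longrightarrow> (\<Prod>k<m. f k) = (\<Prod>k<s. f k) * f s * (\<Prod>k\<in>{s<..<m}. f k)"
proof -
  assume sm: "s < m"
  have e: "{..<m} = {..<s} \<union> ({s} \<union> {s<..<m})" using sm by (auto; linarith)
  have "prod f ({..<s} \<union> ({s} \<union> {s<..<m})) = prod f {..<s} * prod f ({s} \<union> {s<..<m})"
    by (rule prod.union_disjoint) auto
  then show ?thesis unfolding e by (simp add: mult.assoc)
qed


lemma min_formula:
  fixes n :: "nat \<Rightarrow> nat"
  assumes npos: "\<forall>j<m. n j \<ge> 1" and mono: "\<forall>i j. i \<le> j \<and> j < m \<longrightarrow> n j \<le> n i"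
    and sm: "s < m" and ls: "l < n s" and dd: "d = (\<Sum>j\<in>{s<..<m}. n j - 1) + l"
  shows "Min {\<Prod>j<m. n j - u j | u. u \<in> Delta m n \<and> absidx m u = d} = (n s - l) * (\<Prod>j<s. n j)"
proof (rule Min_eqI)
  show "finite {\<Prod>j<m. n j - u j | u. u \<in> Delta m n \<and> absidx m u = d}"
  proof (rule finite_subset[OF _ finite_imageI[OF finite_Delta]])
    show "{\<Prod>j<m. n j - u j | u. u \<in> Delta m n \<and> absidx m u = d} \<subseteq> (\<lambda>u. \<Prod>j<m. n j - u j) ` Delta m n"
      by blast
  qed
next
  fix y assume "y \<in> {\<Prod>j<m. n j - u j | u. u \<in> Delta m n \<and> absidx m u = d}"
  then obtain u where u: "u \<in> Delta m n" "absidx m u = d" and y: "y = (\<Prod>j<m. n j - u j)" by blast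
  have uD: "\<forall>k<m. u k < n k" using u(1) by (simp add: Delta_def)
  have "(\<Sum>k<m. u k) = (\<Sum>j\<in>{s<..<m}. n j - 1) + l" using u(2) dd by (simp add: absidx_def)
  then show "(n s - l) * (\<Prod>j<s. n j) \<le> y" using comb_lower[OF mono uD sm ls] y by simp
next
  define us where "us k = (if k < s then 0 else if k = s then l else if k < m then n k - 1 else 0)" for k
  have usD: "us \<in> Delta m n"
    unfolding Delta_def
  proof (intro CollectI conjI allI impI)
    fix k assume k: "k < m"
    show "us k < n k"
    proof (cases "k < s")
      case True
      have "1 \<le> n k" using npos k by blast
      then show ?thesis using True by (simp add: us_def)
    next
      case False
      then show ?thesis using npos k ls by (cases "k = s") (auto simp: us_def)
    qed
  next
    fix k assume "m \<le> k" then show "us k = 0" using sm by (simp add: us_def)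
  qed
  have "absidx m us = (\<Sum>k<s. us k) + us s + (\<Sum>k\<in>{s<..<m}. us k)"
    unfolding absidx_def by (rule split3_sum[OF sm])
  also have "(\<Sum>k<s. us k) = 0" by (simp add: us_def)
  also have "(\<Sum>k\<in>{s<..<m}. us k) = (\<Sum>k\<in>{s<..<m}. n k - 1)"
    by (rule sum.cong) (auto simp: us_def)
  also have "us s = l" by (simp add: us_def)
  finally have abs: "absidx m us = d" using dd by simp
  have "(\<Prod>j<m. n j - us j) = (\<Prod>j<s. n j - us j) * (n s - us s) * (\<Prod>j\<in>{s<..<m}. n j - us j)"
    by (rule split3_prod[OF sm])
  also have "(\<Prod>j<s. n j - us j) = (\<Prod>j<s. n j)" by (rule prod.cong) (auto simp: us_def)
  also have "(\<Prod>j\<in>{s<..<m}. n j - us j) = 1"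
  proof (rule prod.neutral)
    show "\<forall>x\<in>{s<..<m}. n x - us x = 1" using npos by (auto simp: us_def)
  qed
  also have "us s = l" by (simp add: us_def)
  finally have "(\<Prod>j<m. n j - us j) = (n s - l) * (\<Prod>j<s. n j)" by simp
  then show "(n s - l) * (\<Prod>j<s. n j) \<in> {\<Prod>j<m. n j - u j | u. u \<in> Delta m n \<and> absidx m u = d}"
    using usD abs by force
qed


lemma dedekind_gen:
  fixes \<phi> :: "'x \<Rightarrow> ('a::field \<Rightarrow> 'a)"
  assumes fX: "finite X" and fa: "\<forall>\<xi>\<in>X. field_aut (\<phi> \<xi>)"
    and rel: "\<forall>x. (\<Sum>\<xi>\<in>X. a \<xi> * \<phi> \<xi> x) = 0"
    and g: "g \<in> \<phi> ` X"
  shows "(\<Sum>\<xi>\<in>{\<xi>\<in>X. \<phi> \<xi> = g}. a \<xi>) = 0"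
proof -
  define A where "A h = (\<Sum>\<xi>\<in>{\<xi>\<in>X. \<phi> \<xi> = h}. a \<xi>)" for h
  have "\<forall>x. (\<Sum>h\<in>\<phi> ` X. A h * h x) = 0"
  proof
    fix x
    have "(\<Sum>\<xi>\<in>X. a \<xi> * \<phi> \<xi> x) = (\<Sum>h\<in>\<phi> ` X. \<Sum>\<xi>\<in>{\<xi>\<in>X. \<phi> \<xi> = h}. a \<xi> * \<phi> \<xi> x)"
      by (rule sum.image_gen[OF fX])
    also have "\<dots> = (\<Sum>h\<in>\<phi> ` X. A h * h x)"
      unfolding A_def by (intro sum.cong refl) (simp add: sum_distrib_right)
    finally show "(\<Sum>h\<in>\<phi> ` X. A h * h x) = 0" using rel by simp
  qed
  moreover have "\<forall>h\<in>\<phi> ` X. field_aut h" using fa by auto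
  ultimately have "\<forall>h\<in>\<phi> ` X. A h = 0" using dedekind[of "\<phi> ` X"] fX by blast
  then have "A g = 0" using g by blast
  then show ?thesis by (simp add: A_def)
qed

lemma addm_plain:
  assumes "\<forall>k<m. j k + u k < n k" "\<forall>k\<ge>m. j k = 0" "\<forall>k\<ge>m. u k = 0"
  shows "addm n j u = (\<lambda>k. j k + u k)"
proof
  fix k show "addm n j u k = j k + u k"
    using assms by (cases "k < m") (auto simp: addm_def not_less)
qed

lemma rank_bound:
  fixes K :: "'a::field set"
    and \<theta> :: "nat \<Rightarrow> 'a \<Rightarrow> 'a"
    and G :: "('a \<Rightarrow> 'a) set"
    and b :: "(nat \<Rightarrow> nat) \<Rightarrow> 'a"
  assumes galois: "galois_ext_with_group K G"
    and comm: "\<forall>j<m. \<forall>k<m. \<theta> j \<circ> \<theta> k = \<theta> k \<circ> \<theta> j"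
    and ord: "\<forall>j<m. \<theta> j ^^ n j = id"
    and bij: "bij_betw (theta_pow \<theta> m) (Delta m n) G"
    and P_nz: "\<exists>i\<in>Delta m n. b i \<noteq> 0"
  shows "\<exists>u\<in>Delta m n. absidx m u = theta_deg m n b \<and>
           (\<Prod>k<m. n k - u k) \<le> rank_over K (op_action \<theta> m n b)"
proof -
  define T where "T = theta_pow \<theta> m"
  define D where "D = Delta m n"
  define P where "P = op_action \<theta> m n b"
  have Kf: "is_subfield K" and fG: "finite G" and GG: "galois_group K = G"
    and fixK: "fixed_field (galois_group K) = K"
    using galois by (auto simp: galois_ext_with_group_def)
  have TD: "T ` D = G" and Tinj: "inj_on T D" using bij by (auto simp: bij_betw_def T_def D_def)
  have fD: "finite D" unfolding D_def by (rule finite_Delta)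
  have Tfa: "field_aut (T v)" if "v \<in> D" for v
    using TD that GG by (auto simp: galois_group_def)
  have TK: "T v x = x" if "v \<in> D" "x \<in> K" for v x
    using TD that GG by (auto simp: galois_group_def)
  have Tadd: "T j (T i x) = T (addm n j i) x" for j i x
    unfolding T_def by (rule tp_apply_addm[OF comm ord])
  have Px: "P x = (\<Sum>i\<in>D. b i * T i x)" for x by (simp add: P_def op_action_def T_def D_def)
  define Ind where "Ind = {S. S \<subseteq> range P \<and> lin_indep_over K S}"
  have cardb: "card S \<le> card G" if "S \<in> Ind" for S
    using artin[OF Kf _ fixK] that fG GG by (auto simp: Ind_def)
  have finCS: "finite (card ` Ind)"
    by (rule finite_subset[of _ "{..card G}"]) (auto dest: cardb)
  have "{} \<in> Ind" by (simp add: Ind_def lin_indep_over_def)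
  then have neCS: "card ` Ind \<noteq> {}" by blast
  have rk: "rank_over K P = Max (card ` Ind)" by (simp add: rank_over_def Ind_def)
  obtain S0 where S0: "S0 \<in> Ind" "card S0 = Max (card ` Ind)"
    using Max_in[OF finCS neCS] by auto
  have S0sub: "S0 \<subseteq> range P" and S0ind: "lin_indep_over K S0" using S0 by (auto simp: Ind_def)
  have fS0: "finite S0" using S0ind by (simp add: lin_indep_over_def)
  have span: "\<exists>cs. (\<forall>s\<in>S0. cs s \<in> K) \<and> y = (\<Sum>s\<in>S0. cs s * s)" if y: "y \<in> range P" for y
  proof (cases "y \<in> S0")
    case True
    show ?thesis
    proof (intro exI conjI)
      show "\<forall>s\<in>S0. (\<lambda>s. if s = y then 1 else 0) s \<in> K" using Kf by (simp add: is_subfield_def)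
      have "(\<Sum>s\<in>S0. (\<lambda>s. if s = y then 1 else 0) s * s) = (\<Sum>s\<in>S0. if s = y then y else 0)"
        by (rule sum.cong) auto
      also have "\<dots> = y" using True fS0 by (simp add: sum.delta)
      finally show "y = (\<Sum>s\<in>S0. (\<lambda>s. if s = y then 1 else 0) s * s)" by simp
    qed
  next
    case False
    have "insert y S0 \<subseteq> range P" using S0sub y by auto
    moreover have "card (insert y S0) = card S0 + 1" using False fS0 by simp
    ultimately have "\<not> lin_indep_over K (insert y S0)"
    proof -
      assume sub: "insert y S0 \<subseteq> range P" and cd: "card (insert y S0) = card S0 + 1"
      show ?thesis
      proof
        assume "lin_indep_over K (insert y S0)"
        then have "insert y S0 \<in> Ind" using sub by (simp add: Ind_def)
        then have "card (insert y S0) \<le> Max (card ` Ind)" using finCS by simp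
        then show False using cd S0(2) by simp
      qed
    qed
    then obtain c where c: "\<forall>s\<in>insert y S0. c s \<in> K" "(\<Sum>s\<in>insert y S0. c s * s) = 0"
      and nz: "\<exists>s\<in>insert y S0. c s \<noteq> 0"
      using fS0 by (auto simp: lin_indep_over_def)
    have sum0: "c y * y + (\<Sum>s\<in>S0. c s * s) = 0" using c(2) False fS0 by simp
    have cy: "c y \<noteq> 0"
    proof
      assume "c y = 0"
      then have "(\<Sum>s\<in>S0. c s * s) = 0" using sum0 by simp
      then have "\<forall>s\<in>S0. c s = 0" using S0ind c(1) by (simp add: lin_indep_over_def)
      then show False using nz \<open>c y = 0\<close> by auto
    qed
    define cs where "cs s = - c s / c y" for s
    have "cs s \<in> K" if "s \<in> S0" for s
    proof -
      have "c s \<in> K" "c y \<in> K" using c(1) that by auto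
      then have "inverse (c y) \<in> K" "- c s \<in> K" using Kf cy by (auto simp: is_subfield_def)
      then have "- c s * inverse (c y) \<in> K" using Kf unfolding is_subfield_def by blast
      then show ?thesis by (simp add: cs_def divide_inverse)
    qed
    moreover have "y = (\<Sum>s\<in>S0. cs s * s)"
    proof -
      have "(\<Sum>s\<in>S0. cs s * s) = - (\<Sum>s\<in>S0. c s * s) / c y"
        by (simp add: cs_def sum_divide_distrib sum_negf)
      also have "\<dots> = c y * y / c y" using sum0 by (simp add: eq_neg_iff_add_eq_0[symmetric])
      also have "\<dots> = y" using cy by simp
      finally show ?thesis by simp
    qed
    ultimately show ?thesis by blast
  qed
  define supp where "supp = {i\<in>D. b i \<noteq> 0}"
  have fsupp: "finite supp" using fD by (simp add: supp_def)
  have nesupp: "supp \<noteq> {}" using P_nz by (auto simp: supp_def D_def)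
  have "Max (key m ` supp) \<in> key m ` supp" using fsupp nesupp by (intro Max_in) auto
  then obtain u where u: "u \<in> supp" "key m u = Max (key m ` supp)" by (metis imageE)
  have uD: "u \<in> D" and bu: "b u \<noteq> 0" using u by (auto simp: supp_def)
  have keyle: "key m i \<le> key m u" if "i \<in> supp" for i
    using u(2) fsupp that by simp
  have keylt: "key m i < key m u" if "i \<in> supp" "i \<noteq> u" for i
  proof -
    have "key m i \<noteq> key m u" using key_inj[of m n] that uD by (auto simp: supp_def D_def inj_on_def)
    then show ?thesis using keyle[OF that(1)] by simp
  qed
  have absu: "absidx m u = theta_deg m n b"
    unfolding theta_deg_def
  proof (rule sym, rule Max_eqI)
    show "finite {absidx m i |i. i \<in> Delta m n \<and> b i \<noteq> 0}"
      using fsupp by (simp add: supp_def D_def)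
    show "absidx m u \<in> {absidx m i |i. i \<in> Delta m n \<and> b i \<noteq> 0}"
      using uD bu by (auto simp: D_def)
  next
    fix y assume "y \<in> {absidx m i |i. i \<in> Delta m n \<and> b i \<noteq> 0}"
    then obtain i where i: "i \<in> supp" "y = absidx m i" by (auto simp: supp_def D_def)
    then show "y \<le> absidx m u" using keyle[OF i(1)] by (auto simp: key_def)
  qed
  define J where "J = Delta m (\<lambda>k. n k - u k)"
  have cardJ: "card J = (\<Prod>k<m. n k - u k)" unfolding J_def by (rule card_Delta)
  have fJ: "finite J" unfolding J_def by (rule finite_Delta)
  have Jprop: "(\<forall>k<m. j k + u k < n k) \<and> (\<forall>k\<ge>m. j k = 0)" if "j \<in> J" for j
    using that by (auto simp: J_def Delta_def)
  have uprop: "(\<forall>k<m. u k < n k) \<and> (\<forall>k\<ge>m. u k = 0)" using uD by (simp add: D_def Delta_def)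
  have JD: "j \<in> D" if "j \<in> J" for j
    using Jprop[OF that] by (auto simp: D_def Delta_def)
  have addmJ: "addm n j u = (\<lambda>k. j k + u k)" if "j \<in> J" for j
  proof -
    have A: "\<forall>k<m. j k + u k < n k" and B: "\<forall>k\<ge>m. j k = 0" using Jprop[OF that] by auto
    have C: "\<forall>k\<ge>m. u k = 0" using uprop by auto
    show ?thesis by (rule addm_plain[OF A B C])
  qed
  have "(\<Prod>k<m. n k - u k) \<le> card S0"
  proof (rule ccontr)
    assume "\<not> ?thesis"
    then have lt: "card S0 < card J" using cardJ by simp
    obtain c where cnz: "\<exists>j\<in>J. c j \<noteq> 0" and csol: "\<forall>w\<in>S0. (\<Sum>j\<in>J. T j w * c j) = 0"
      using homog[OF fS0 fJ lt, of "\<lambda>w j. T j w"] by blast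
    have vanish: "(\<Sum>j\<in>J. c j * T j (P x)) = 0" for x
    proof -
      obtain cs where cs: "\<forall>s\<in>S0. cs s \<in> K" "P x = (\<Sum>s\<in>S0. cs s * s)"
        using span[of "P x"] by blast
      have "(\<Sum>j\<in>J. c j * T j (P x)) = (\<Sum>j\<in>J. c j * (\<Sum>s\<in>S0. cs s * T j s))"
      proof (rule sum.cong[OF refl])
        fix j assume j: "j \<in> J"
        have "T j (P x) = (\<Sum>s\<in>S0. T j (cs s) * T j s)"
          unfolding cs(2) using Tfa[OF JD[OF j]] by (simp add: fa_sum fa_mult)
        also have "\<dots> = (\<Sum>s\<in>S0. cs s * T j s)"
          using TK[OF JD[OF j]] cs(1) by (intro sum.cong) auto
        finally show "c j * T j (P x) = c j * (\<Sum>s\<in>S0. cs s * T j s)" by simp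
      qed
      also have "\<dots> = (\<Sum>s\<in>S0. cs s * (\<Sum>j\<in>J. T j s * c j))"
        by (simp add: sum_distrib_left sum.swap[of _ J S0] mult_ac)
      also have "\<dots> = 0" using csol by simp
      finally show ?thesis .
    qed
    define X where "X = J \<times> D"
    define a where "a = (\<lambda>(j, i). c j * T j (b i))"
    define \<phi> where "\<phi> = (\<lambda>(j::nat\<Rightarrow>nat, i::nat\<Rightarrow>nat). T (addm n j i))"
    have fX: "finite X" using fJ fD by (simp add: X_def)
    have faX: "\<forall>\<xi>\<in>X. field_aut (\<phi> \<xi>)"
      using Tfa addm_Delta JD by (auto simp: X_def \<phi>_def D_def)
    have rel: "\<forall>x. (\<Sum>\<xi>\<in>X. a \<xi> * \<phi> \<xi> x) = 0"
    proof
      fix x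
      have "(\<Sum>j\<in>J. c j * T j (P x)) = (\<Sum>j\<in>J. \<Sum>i\<in>D. c j * T j (b i) * T (addm n j i) x)"
      proof (rule sum.cong[OF refl])
        fix j assume j: "j \<in> J"
        have "T j (P x) = (\<Sum>i\<in>D. T j (b i) * T j (T i x))"
          unfolding Px using Tfa[OF JD[OF j]] by (simp add: fa_sum fa_mult)
        then show "c j * T j (P x) = (\<Sum>i\<in>D. c j * T j (b i) * T (addm n j i) x)"
          by (simp add: Tadd sum_distrib_left mult_ac)
      qed
      also have "\<dots> = (\<Sum>\<xi>\<in>X. a \<xi> * \<phi> \<xi> x)"
        unfolding X_def a_def \<phi>_def by (subst sum.cartesian_product) (rule sum.cong, auto)
      finally show "(\<Sum>\<xi>\<in>X. a \<xi> * \<phi> \<xi> x) = 0" using vanish by simp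
    qed
    define Jc where "Jc = {j\<in>J. c j \<noteq> 0}"
    have fJc: "finite Jc" using fJ by (simp add: Jc_def)
    have neJc: "Jc \<noteq> {}" using cnz by (auto simp: Jc_def)
    have "Max ((\<lambda>j. key m (\<lambda>k. j k + u k)) ` Jc) \<in> (\<lambda>j. key m (\<lambda>k. j k + u k)) ` Jc"
      using fJc neJc by (intro Max_in) auto
    then obtain js where js: "js \<in> Jc" "key m (\<lambda>k. js k + u k) = Max ((\<lambda>j. key m (\<lambda>k. j k + u k)) ` Jc)"
      by (metis (no_types, lifting) imageE)
    have jsJ: "js \<in> J" and cjs: "c js \<noteq> 0" using js by (auto simp: Jc_def)
    have jsmax: "key m (\<lambda>k. j k + u k) \<le> key m (\<lambda>k. js k + u k)" if "j \<in> Jc" for j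
      using js(2) fJc that by simp
    define v where "v = (\<lambda>k. js k + u k)"
    have vD: "v \<in> D" using addmJ[OF jsJ] addm_Delta[of js m n u] JD[OF jsJ] uD
      by (simp add: v_def D_def)
    have gin: "T v \<in> \<phi> ` X"
    proof
      show "(js, u) \<in> X" using jsJ uD by (simp add: X_def)
      show "T v = \<phi> (js, u)" using addmJ[OF jsJ] by (simp add: \<phi>_def v_def)
    qed
    have coef: "(\<Sum>\<xi>\<in>{\<xi>\<in>X. \<phi> \<xi> = T v}. a \<xi>) = 0"
      by (rule dedekind_gen[OF fX faX rel gin])
    have others: "a \<xi> = 0" if xi: "\<xi> \<in> {\<xi>\<in>X. \<phi> \<xi> = T v} - {(js, u)}" for \<xi>
    proof -
      obtain j i where ji: "\<xi> = (j, i)" by (cases \<xi>)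
      have jJ: "j \<in> J" and iD: "i \<in> D" and ph: "T (addm n j i) = T v" and ne: "(j, i) \<noteq> (js, u)"
        using xi ji by (auto simp: X_def \<phi>_def)
      have addD: "addm n j i \<in> D" using addm_Delta[of j m n i] JD[OF jJ] iD by (simp add: D_def)
      have av: "addm n j i = v" using Tinj addD vD ph by (auto simp: inj_on_def)
      show ?thesis
      proof (rule ccontr)
        assume "a \<xi> \<noteq> 0"
        then have cj: "c j \<noteq> 0" and bi: "b i \<noteq> 0"
          using ji fa_zero[OF Tfa[OF JD[OF jJ]]] by (auto simp: a_def)
        have jc: "j \<in> Jc" using jJ cj by (simp add: Jc_def)
        have isupp: "i \<in> supp" using iD bi by (simp add: supp_def)
        show False
        proof (cases "i = u")
          case True
          then have "(\<lambda>k. j k + u k) = v" using av addmJ[OF jJ] by simp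
          then have "j = js" unfolding v_def by (metis add_right_cancel ext)
          then show False using ne True by simp
        next
          case False
          have "key m (addm n j i) < key m (\<lambda>k. j k + u k)"
            using key_main[of i m n u j] iD uD keylt[OF isupp False] JD[OF jJ] Jprop[OF jJ]
            by (simp add: D_def)
          also have "\<dots> \<le> key m v" using jsmax[OF jc] by (simp add: v_def)
          finally show False using av by simp
        qed
      qed
    qed
    have mem: "(js, u) \<in> {\<xi>\<in>X. \<phi> \<xi> = T v}"
      using jsJ uD addmJ[OF jsJ] by (simp add: X_def \<phi>_def v_def)
    have "(\<Sum>\<xi>\<in>{\<xi>\<in>X. \<phi> \<xi> = T v}. a \<xi>) = a (js, u) + (\<Sum>\<xi>\<in>{\<xi>\<in>X. \<phi> \<xi> = T v} - {(js, u)}. a \<xi>)"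
      using fX mem by (intro sum.remove) auto
    also have "(\<Sum>\<xi>\<in>{\<xi>\<in>X. \<phi> \<xi> = T v} - {(js, u)}. a \<xi>) = 0"
      using others by (intro sum.neutral) blast
    finally have "a (js, u) = 0" using coef by simp
    then have "c js * T js (b u) = 0" by (simp add: a_def)
    moreover have "T js (b u) \<noteq> 0" using fa_eq0[OF Tfa[OF JD[OF jsJ]]] bu by simp
    ultimately show False using cjs by simp
  qed
  then have "(\<Prod>k<m. n k - u k) \<le> rank_over K P" using rk S0(2) by simp
  then show ?thesis using uD absu by (auto simp: D_def P_def)
qed


theorem mainTheorem13:
  fixes K :: "'a::field set"
    and \<theta> :: "nat \<Rightarrow> 'a \<Rightarrow> 'a"
    and m :: nat
    and n :: "nat \<Rightarrow> nat"
    and G :: "('a \<Rightarrow> 'a) set"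
    and b :: "(nat \<Rightarrow> nat) \<Rightarrow> 'a"
  assumes m_pos: "m \<ge> 1"
    and n_ge2: "\<forall>j<m. n j \<ge> 2"
    and n_mono: "\<forall>i j. i \<le> j \<and> j < m \<longrightarrow> n j \<le> n i"
    and galois: "galois_ext_with_group K G"
    and comm: "\<forall>j<m. \<forall>k<m. \<theta> j \<circ> \<theta> k = \<theta> k \<circ> \<theta> j"
    and ord: "\<forall>j<m. \<theta> j ^^ n j = id"
    and bij: "bij_betw (theta_pow \<theta> m) (Delta m n) G"
    and b_supp: "\<forall>i. b i \<noteq> 0 \<longrightarrow> i \<in> Delta m n"
    and P_nz: "\<exists>i\<in>Delta m n. b i \<noteq> 0"
  shows "rank_over K (op_action \<theta> m n b)
           \<ge> Min {\<Prod>j<m. n j - u j | u. u \<in> Delta m n \<and> absidx m u = theta_deg m n b}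
     \<and> (\<forall>s l. s < m \<and> l < n s \<and>
           theta_deg m n b = (\<Sum>j\<in>{s<..<m}. n j - 1) + l \<longrightarrow>
           Min {\<Prod>j<m. n j - u j | u. u \<in> Delta m n \<and> absidx m u = theta_deg m n b}
             = (n s - l) * (\<Prod>j<s. n j))"
proof -
  obtain u where u: "u \<in> Delta m n" "absidx m u = theta_deg m n b"
      "(\<Prod>k<m. n k - u k) \<le> rank_over K (op_action \<theta> m n b)"
    using rank_bound[OF galois comm ord bij P_nz] by blast
  have fin: "finite {\<Prod>j<m. n j - u j | u. u \<in> Delta m n \<and> absidx m u = theta_deg m n b}"
  proof (rule finite_subset[OF _ finite_imageI[OF finite_Delta]])
    show "{\<Prod>j<m. n j - u j | u. u \<in> Delta m n \<and> absidx m u = theta_deg m n b}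
        \<subseteq> (\<lambda>u. \<Prod>j<m. n j - u j) ` Delta m n" by blast
  qed
  have mem: "(\<Prod>k<m. n k - u k) \<in> {\<Prod>j<m. n j - u j | u. u \<in> Delta m n \<and> absidx m u = theta_deg m n b}"
    using u(1,2) by blast
  have part1: "rank_over K (op_action \<theta> m n b)
           \<ge> Min {\<Prod>j<m. n j - u j | u. u \<in> Delta m n \<and> absidx m u = theta_deg m n b}"
    using Min_le[OF fin mem] u(3) by linarith
  have npos: "\<forall>j<m. n j \<ge> 1" using n_ge2 by auto
  show ?thesis
  proof (intro conjI part1 allI impI)
    fix s l assume h: "s < m \<and> l < n s \<and> theta_deg m n b = (\<Sum>j\<in>{s<..<m}. n j - 1) + l"
    show "Min {\<Prod>j<m. n j - u j | u. u \<in> Delta m n \<and> absidx m u = theta_deg m n b}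
             = (n s - l) * (\<Prod>j<s. n j)"
      using min_formula[OF npos n_mono, of s l "theta_deg m n b"] h by blast
  qed
qed

end
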